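(* Let $G=\langle x,y\mid x^2y^3=1\rangle$ and $C=\langle a,b\mid (ab^{-3})^2b^6=1\rangle$. Then $x\mapsto ab^{-3}$, $y\mapsto b^2$ defines an embedding $G\hookrightarrow C$; $C$ is isomorphic, via $a\mapsto a_0$, $b\mapsto b$, to $G_1=\langle a_0,a_{-1},a_{-2},b\mid a_0b=ba_{-1},\ a_{-1}b=ba_{-2},\ a_{-2}b=ba_0^{-1}\rangle$; and every element of $G_1$ has a unique representation $b^na_{i_1}^{\varepsilon_1}\cdots a_{i_m}^{\varepsilon_m}$ with $n\in\mathbb Z$, $m\ge0$, $-2\le i_j\le 0$, $\varepsilon_j=\pm1$, and no consecutive pair $a_i^{\varepsilon}a_i^{-\varepsilon}$. *)

theory Defs
  imports "HOL-Algebra.Algebra"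
begin

text \<open>A word over generators of type 'g is a list of letters (g, e); e = False
  stands for the generator g and e = True for its inverse.\<close>

type_synonym 'g word = "('g \<times> bool) list"

inductive pres_eq :: "'g word set \<Rightarrow> 'g word \<Rightarrow> 'g word \<Rightarrow> bool" for R where
  refl: "pres_eq R w w"
| sym: "pres_eq R u v \<Longrightarrow> pres_eq R v u"
| trans: "pres_eq R u v \<Longrightarrow> pres_eq R v w \<Longrightarrow> pres_eq R u w"
| cancel: "pres_eq R (u @ [(g, e), (g, \<not> e)] @ v) (u @ v)"
| relator: "r \<in> R \<Longrightarrow> pres_eq R (u @ r @ v) (u @ v)"

definition presented_group :: "'g word set \<Rightarrow> 'g word set monoid" where
  "presented_group R =
     \<lparr> carrier = UNIV // {(u, v). pres_eq R u v},
       monoid.mult = (\<lambda>P Q. {w. \<exists>x\<in>P. \<exists>y\<in>Q. pres_eq R (x @ y) w}),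
       monoid.one = {w. pres_eq R [] w} \<rparr>"

definition word_class :: "'g word set \<Rightarrow> 'g word \<Rightarrow> 'g word set" where
  "word_class R w = {v. pres_eq R w v}"

datatype genG = Gx | Gy
datatype genC = Ca | Cb
datatype genG1 = A0 | Am1 | Am2 | Bg

definition relG :: "genG word set" where
  "relG = {[(Gx, False), (Gx, False), (Gy, False), (Gy, False), (Gy, False)]}"

definition relC :: "genC word set" where
  "relC = {[(Ca, False), (Cb, True), (Cb, True), (Cb, True),
            (Ca, False), (Cb, True), (Cb, True), (Cb, True),
            (Cb, False), (Cb, False), (Cb, False), (Cb, False), (Cb, False), (Cb, False)]}"

text \<open>G1 = < a0, a_-1, a_-2, b | a0 b = b a_-1, a_-1 b = b a_-2, a_-2 b = b a0^-1 >,
  relations written as relators a0 b a_-1^-1 b^-1 etc.\<close>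
definition relG1 :: "genG1 word set" where
  "relG1 = {[(A0, False), (Bg, False), (Am1, True), (Bg, True)],
            [(Am1, False), (Bg, False), (Am2, True), (Bg, True)],
            [(Am2, False), (Bg, False), (A0, False), (Bg, True)]}"

abbreviation "grpG \<equiv> presented_group relG"
abbreviation "grpC \<equiv> presented_group relC"
abbreviation "grpG1 \<equiv> presented_group relG1"

definition letters_prod :: "genG1 word \<Rightarrow> genG1 word set" where
  "letters_prod as = foldr (\<lambda>(l, e) acc.
      (if e then inv\<^bsub>grpG1\<^esub> (word_class relG1 [(l, False)]) else word_class relG1 [(l, False)])
        \<otimes>\<^bsub>grpG1\<^esub> acc) as \<one>\<^bsub>grpG1\<^esub>"

definition normal_letters :: "genG1 word \<Rightarrow> bool" where
  "normal_letters as \<longleftrightarrow> (\<forall>le\<in>set as. fst le \<noteq> Bg) \<and>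
     (\<forall>j. Suc j < length as \<longrightarrow>
        \<not> (fst (as ! j) = fst (as ! Suc j) \<and> snd (as ! j) \<noteq> snd (as ! Suc j)))"

end

theory Submission
  imports Defs
begin


fun linv :: "'g \<times> bool \<Rightarrow> 'g \<times> bool" where "linv (a, e) = (a, \<not> e)"

lemma linv_linv[simp]: "linv (linv l) = l"
  by (cases l) simp
lemma fst_linv[simp]: "fst (linv l) = fst l" by (cases l) simp
lemma snd_linv[simp]: "snd (linv l) = (\<not> snd l)" by (cases l) simp
lemma linv_neq[simp]: "linv l \<noteq> l" "l \<noteq> linv l" by (cases l, simp)+

definition winv :: "'g word \<Rightarrow> 'g word" where "winv w = rev (map linv w)"

lemma winv_Nil[simp]: "winv [] = []" by (simp add: winv_def)
lemma winv_Cons[simp]: "winv (l # w) = winv w @ [linv l]" by (simp add: winv_def)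
lemma winv_append[simp]: "winv (u @ v) = winv v @ winv u" by (simp add: winv_def)
lemma winv_winv[simp]: "winv (winv w) = w" by (simp add: winv_def rev_map o_def)

fun redc :: "'g \<times> bool \<Rightarrow> 'g word \<Rightarrow> 'g word" where
  "redc l [] = [l]"
| "redc l (l' # w) = (if l' = linv l then w else l # l' # w)"

fun fred :: "'g word \<Rightarrow> 'g word" where
  "fred [] = []"
| "fred (l # w) = redc l (fred w)"

lemma pe_refl[intro, simp]: "pres_eq R w w" by (rule pres_eq.refl)
lemma pe_sym: "pres_eq R u v \<Longrightarrow> pres_eq R v u" by (rule pres_eq.sym)
lemma pe_trans[trans]: "pres_eq R u v \<Longrightarrow> pres_eq R v w \<Longrightarrow> pres_eq R u w" by (rule pres_eq.trans)

lemma pe_app_left: "pres_eq R u v \<Longrightarrow> pres_eq R (w @ u) (w @ v)"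
proof (induction rule: pres_eq.induct)
  case (cancel u g e v)
  then show ?case using pres_eq.cancel[of R "w @ u" g e v] by simp
next
  case (relator r u v)
  then show ?case using pres_eq.relator[of r R "w @ u" v] by simp
qed (auto intro: pres_eq.intros)

lemma pe_app_right: "pres_eq R u v \<Longrightarrow> pres_eq R (u @ w) (v @ w)"
proof (induction rule: pres_eq.induct)
  case (cancel u g e v)
  then show ?case using pres_eq.cancel[of R u g e "v @ w"] by simp
next
  case (relator r u v)
  then show ?case using pres_eq.relator[of r R u "v @ w"] by simp
qed (auto intro: pres_eq.intros)

lemma pe_app: "pres_eq R u u' \<Longrightarrow> pres_eq R v v' \<Longrightarrow> pres_eq R (u @ v) (u' @ v')"
  by (meson pe_app_left pe_app_right pe_trans)

lemma pe_cancel2: "pres_eq R (u @ [l, linv l] @ v) (u @ v)"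
proof -
  obtain a b where "l = (a, b)" by (cases l)
  then show ?thesis using pres_eq.cancel[of R u a b v] by simp
qed

lemma pe_redc: "pres_eq R (l # w) (redc l w)"
proof (cases w)
  case (Cons l' w')
  show ?thesis
  proof (cases "l' = linv l")
    case True
    then show ?thesis using Cons pe_cancel2[of R "[]" l w'] by simp
  qed (use Cons in simp)
qed simp

lemma pe_fred: "pres_eq R w (fred w)"
proof (induction w)
  case (Cons l w)
  have "pres_eq R (l # w) (l # fred w)" using pe_app_left[OF Cons, of "[l]"] by simp
  also have "pres_eq R \<dots> (fred (l # w))" by (simp add: pe_redc)
  finally show ?case .
qed simp

lemma pe_winv_r: "pres_eq R (w @ winv w) []"
proof (induction w)
  case (Cons l w)
  have "pres_eq R ((l # w) @ winv (l # w)) ([l] @ (w @ winv w) @ [linv l])" by simp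
  also have "pres_eq R \<dots> ([l] @ [] @ [linv l])" by (intro pe_app Cons) auto
  also have "pres_eq R \<dots> []" using pe_cancel2[of R "[]" l "[]"] by simp
  finally show ?case .
qed simp

lemma pe_winv_l: "pres_eq R (winv w @ w) []"
  using pe_winv_r[of R "winv w"] by simp

lemma pe_rel: "r \<in> R \<Longrightarrow> pres_eq R r []"
  using pres_eq.relator[of r R "[]" "[]"] by simp

lemma pe_rel_inv: "r \<in> R \<Longrightarrow> pres_eq R (winv r) []"
proof -
  assume r: "r \<in> R"
  have "pres_eq R (winv r) (winv r @ r)"
    using pres_eq.relator[OF r, of "winv r" "[]"] by (simp add: pe_sym)
  also have "pres_eq R \<dots> []" by (rule pe_winv_l)
  finally show ?thesis .
qed

definition cjw :: "'g word \<times> bool \<times> 'g word \<Rightarrow> 'g word" where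
  "cjw t = (case t of (c, e, r) \<Rightarrow> c @ (if e then winv r else r) @ winv c)"

lemma pe_cjw: "snd (snd t) \<in> R \<Longrightarrow> pres_eq R (cjw t) []"
proof -
  obtain c e r where t: "t = (c, e, r)" by (cases t) auto
  assume "snd (snd t) \<in> R"
  then have r: "r \<in> R" using t by simp
  have "pres_eq R (if e then winv r else r) []" using pe_rel[OF r] pe_rel_inv[OF r] by simp
  then have "pres_eq R (c @ (if e then winv r else r) @ winv c) (c @ [] @ winv c)"
    by (intro pe_app) auto
  also have "pres_eq R \<dots> []" using pe_winv_r by simp
  finally show ?thesis using t by (simp add: cjw_def)
qed

lemma pe_cjs: "\<forall>t\<in>set L. snd (snd t) \<in> R \<Longrightarrow> pres_eq R (concat (map cjw L)) []"
proof (induction L)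
  case (Cons t L)
  have "pres_eq R (cjw t @ concat (map cjw L)) ([] @ [])"
    using Cons by (intro pe_app pe_cjw) auto
  then show ?case by simp
qed simp

lemma pe_byL:
  assumes "fred (u @ winv v) = fred (concat (map cjw L))" "\<forall>t\<in>set L. snd (snd t) \<in> R"
  shows "pres_eq R u v"
proof -
  have "pres_eq R u (u @ (winv v @ v))"
    using pe_app_left[OF pe_winv_l[of R v], of u] by (simp add: pe_sym)
  also have "\<dots> = (u @ winv v) @ v" by simp
  also have "pres_eq R \<dots> ([] @ v)"
  proof (rule pe_app)
    have "pres_eq R (u @ winv v) (fred (u @ winv v))" by (rule pe_fred)
    also have "\<dots> = fred (concat (map cjw L))" by (rule assms(1))
    also have "pres_eq R \<dots> (concat (map cjw L))" by (rule pe_sym, rule pe_fred)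
    also have "pres_eq R \<dots> []" by (rule pe_cjs[OF assms(2)])
    finally show "pres_eq R (u @ winv v) []" .
  qed simp
  finally show ?thesis by simp
qed

lemma pe_free: "fred (u @ winv v) = [] \<Longrightarrow> pres_eq R u v"
  using pe_byL[of u v "[]"] by simp

section \<open>Word homomorphisms\<close>

definition wmap :: "('g \<times> bool \<Rightarrow> 'h word) \<Rightarrow> 'g word \<Rightarrow> 'h word" where
  "wmap g w = concat (map g w)"

lemma wmap_simps[simp]: "wmap g [] = []" "wmap g (l # w) = g l @ wmap g w"
  "wmap g (u @ v) = wmap g u @ wmap g v"
  by (simp_all add: wmap_def)

definition lett :: "('g \<Rightarrow> 'h word) \<Rightarrow> 'g \<times> bool \<Rightarrow> 'h word" where
  "lett g0 l = (if snd l then winv (g0 (fst l)) else g0 (fst l))"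

lemma lett_linv: "lett g0 (linv l) = winv (lett g0 l)"
  by (simp add: lett_def)

lemma pe_wmap:
  assumes rel: "\<forall>r\<in>R. pres_eq S (wmap (lett g0) r) []"
  shows "pres_eq R u v \<Longrightarrow> pres_eq S (wmap (lett g0) u) (wmap (lett g0) v)"
proof (induction rule: pres_eq.induct)
  case (cancel u g e v)
  have "lett g0 (g, \<not> e) = winv (lett g0 (g, e))" using lett_linv[of g0 "(g,e)"] by simp
  then have "wmap (lett g0) (u @ [(g, e), (g, \<not> e)] @ v) =
      wmap (lett g0) u @ (lett g0 (g, e) @ winv (lett g0 (g, e))) @ wmap (lett g0) v" by simp
  also have "pres_eq S \<dots> (wmap (lett g0) u @ [] @ wmap (lett g0) v)"
    by (intro pe_app pe_winv_r) auto
  finally show ?case by simp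
next
  case (relator r u v)
  have "wmap (lett g0) (u @ r @ v) = wmap (lett g0) u @ wmap (lett g0) r @ wmap (lett g0) v" by simp
  also have "pres_eq S \<dots> (wmap (lett g0) u @ [] @ wmap (lett g0) v)"
    using rel relator by (intro pe_app) auto
  finally show ?case by simp
qed (auto intro: pres_eq.intros)

section \<open>Presented groups\<close>

lemma wc_eq: "word_class R u = word_class R v \<longleftrightarrow> pres_eq R u v"
proof
  assume "word_class R u = word_class R v"
  then have "v \<in> word_class R u" by (auto simp: word_class_def)
  then show "pres_eq R u v" by (simp add: word_class_def)
next
  assume "pres_eq R u v"
  then show "word_class R u = word_class R v"
    by (auto simp: word_class_def intro: pe_trans pe_sym)
qed

lemma wc_carrier[simp]: "word_class R w \<in> carrier (presented_group R)"
  by (auto simp: presented_group_def quotient_def word_class_def Image_def)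

lemma carrier_wc: "P \<in> carrier (presented_group R) \<Longrightarrow> \<exists>w. P = word_class R w"
  by (auto simp: presented_group_def quotient_def word_class_def Image_def)

lemma wc_mult[simp]: "word_class R u \<otimes>\<^bsub>presented_group R\<^esub> word_class R v = word_class R (u @ v)"
  unfolding presented_group_def word_class_def
  by (auto intro: pe_trans pe_app pe_sym)

lemma wc_one: "\<one>\<^bsub>presented_group R\<^esub> = word_class R []"
  by (simp add: presented_group_def word_class_def)

lemma group_pg: "group (presented_group R)"
proof (rule groupI)
  fix x y assume "x \<in> carrier (presented_group R)" "y \<in> carrier (presented_group R)"
  then show "x \<otimes>\<^bsub>presented_group R\<^esub> y \<in> carrier (presented_group R)"
    by (auto dest!: carrier_wc)
next
  show "\<one>\<^bsub>presented_group R\<^esub> \<in> carrier (presented_group R)" by (simp add: wc_one)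
next
  fix x y z assume "x \<in> carrier (presented_group R)" "y \<in> carrier (presented_group R)"
    "z \<in> carrier (presented_group R)"
  then show "x \<otimes>\<^bsub>presented_group R\<^esub> y \<otimes>\<^bsub>presented_group R\<^esub> z =
        x \<otimes>\<^bsub>presented_group R\<^esub> (y \<otimes>\<^bsub>presented_group R\<^esub> z)"
    by (auto dest!: carrier_wc)
next
  fix x assume "x \<in> carrier (presented_group R)"
  then show "\<one>\<^bsub>presented_group R\<^esub> \<otimes>\<^bsub>presented_group R\<^esub> x = x"
    by (auto dest!: carrier_wc simp: wc_one)
next
  fix x assume "x \<in> carrier (presented_group R)"
  then obtain w where w: "x = word_class R w" using carrier_wc by blast
  have "word_class R (winv w) \<otimes>\<^bsub>presented_group R\<^esub> x = \<one>\<^bsub>presented_group R\<^esub>"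
    using w pe_winv_l by (simp add: wc_one wc_eq)
  then show "\<exists>y\<in>carrier (presented_group R). y \<otimes>\<^bsub>presented_group R\<^esub> x = \<one>\<^bsub>presented_group R\<^esub>"
    by (intro bexI[of _ "word_class R (winv w)"]) auto
qed

lemma wc_inv: "inv\<^bsub>presented_group R\<^esub> (word_class R w) = word_class R (winv w)"
proof -
  interpret group "presented_group R" by (rule group_pg)
  show ?thesis
    by (rule inv_equality) (simp_all add: wc_one wc_eq pe_winv_l)
qed

fun wpow :: "nat \<Rightarrow> 'g word \<Rightarrow> 'g word" where
  "wpow 0 w = []"
| "wpow (Suc k) w = wpow k w @ w"

lemma wc_pow: "word_class R w [^]\<^bsub>presented_group R\<^esub> (k::nat) = word_class R (wpow k w)"
  by (induction k) (simp_all add: wc_one)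

definition indh :: "'g word set \<Rightarrow> 'h word set \<Rightarrow> ('g \<times> bool \<Rightarrow> 'h word) \<Rightarrow> 'g word set \<Rightarrow> 'h word set"
  where "indh R S g P = word_class S (wmap g (SOME w. w \<in> P))"

lemma indh_wc:
  assumes rel: "\<forall>r\<in>R. pres_eq S (wmap (lett g0) r) []"
  shows "indh R S (lett g0) (word_class R u) = word_class S (wmap (lett g0) u)"
proof -
  have "u \<in> word_class R u" by (simp add: word_class_def)
  then have "(SOME w. w \<in> word_class R u) \<in> word_class R u" by (rule someI)
  then have "pres_eq R u (SOME w. w \<in> word_class R u)" by (simp add: word_class_def)
  then have "pres_eq S (wmap (lett g0) u) (wmap (lett g0) (SOME w. w \<in> word_class R u))"
    by (rule pe_wmap[OF rel])
  then show ?thesis unfolding indh_def by (simp add: wc_eq pe_sym)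
qed

lemma indh_hom:
  assumes rel: "\<forall>r\<in>R. pres_eq S (wmap (lett g0) r) []"
  shows "indh R S (lett g0) \<in> hom (presented_group R) (presented_group S)"
  unfolding hom_def
  by (auto dest!: carrier_wc simp: indh_wc[OF rel])




fun sig :: "genG1 \<times> bool \<Rightarrow> genG1 \<times> bool" where
  "sig (A0, e) = (Am1, e)" | "sig (Am1, e) = (Am2, e)" | "sig (Am2, e) = (A0, \<not> e)" | "sig (Bg, e) = (Bg, e)"
fun sgi :: "genG1 \<times> bool \<Rightarrow> genG1 \<times> bool" where
  "sgi (A0, e) = (Am2, \<not> e)" | "sgi (Am1, e) = (A0, e)" | "sgi (Am2, e) = (Am1, e)" | "sgi (Bg, e) = (Bg, e)"

lemma letter_cases: "(\<And>e. P (A0, e)) \<Longrightarrow> (\<And>e. P (Am1, e)) \<Longrightarrow> (\<And>e. P (Am2, e)) \<Longrightarrow> (\<And>e. P (Bg, e)) \<Longrightarrow> P l"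
  apply (cases l) apply (rename_tac a b) apply (case_tac a) by auto

lemma sig_sgi[simp]: "sig (sgi l) = l" "sgi (sig l) = l"
  by (cases l, rename_tac a e, case_tac a, simp_all)+
lemma sig_linv[simp]: "sig (linv l) = linv (sig l)" "sgi (linv l) = linv (sgi l)"
  by (cases l, rename_tac a e, case_tac a, simp_all)+
lemma sig_inj[simp]: "sig l = sig l' \<longleftrightarrow> l = l'" "sgi l = sgi l' \<longleftrightarrow> l = l'"
  by (metis sig_sgi)+
lemma sig_eq_linv[simp]: "sig a = linv (sig b) \<longleftrightarrow> a = linv b" "sgi a = linv (sgi b) \<longleftrightarrow> a = linv b"
  by (metis sig_linv sig_inj)+
lemma sig_Bg[simp]: "fst (sig l) = Bg \<longleftrightarrow> fst l = Bg" "fst (sgi l) = Bg \<longleftrightarrow> fst l = Bg"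
  by (cases l, rename_tac a e, case_tac a, simp_all)+
lemma map_sig_sgi[simp]: "map sig (map sgi w) = w" "map sgi (map sig w) = w"
  by (induction w) auto
lemma comp_sig_sgi[simp]: "sig \<circ> sgi = id" "sgi \<circ> sig = id"
  by (auto simp: fun_eq_iff)

fun stX :: "int \<times> genG1 word \<Rightarrow> genG1 \<times> bool \<Rightarrow> int \<times> genG1 word" where
  "stX (n, r) (Bg, e) = (if e then (n - 1, map sgi r) else (n + 1, map sig r))"
| "stX (n, r) l = (n, redc l r)"

definition nc :: "genG1 \<times> bool \<Rightarrow> genG1 \<times> bool \<Rightarrow> bool" where "nc a b \<longleftrightarrow> b \<noteq> linv a"

definition rd :: "genG1 word \<Rightarrow> bool" where
  "rd r \<longleftrightarrow> (\<forall>l\<in>set r. fst l \<noteq> Bg) \<and> successively nc r"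

lemma nc_sym: "nc a b \<longleftrightarrow> nc b a" unfolding nc_def by (metis linv_linv)

lemma redc_inv: "rd r \<Longrightarrow> redc (linv l) (redc l r) = r"
proof (cases r)
  case (Cons l' r')
  assume rd: "rd r"
  show ?thesis
  proof (cases "l' = linv l")
    case True
    show ?thesis
    proof (cases r')
      case (Cons l'' r'')
      then have "l'' \<noteq> l" using rd True \<open>r = l' # r'\<close> by (auto simp: rd_def nc_def)
      then show ?thesis using Cons True \<open>r = l' # r'\<close> by auto
    qed (use True Cons in auto)
  qed (use Cons in auto)
qed simp

lemma redc_inv2: "rd r \<Longrightarrow> redc (a, True) (redc (a, False) r) = r"
  "rd r \<Longrightarrow> redc (a, False) (redc (a, True) r) = r"
  using redc_inv[of r "(a, False)"] redc_inv[of r "(a, True)"] by auto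
lemma redc_inv3: "rd r \<Longrightarrow> redc (a, \<not> e) (redc (a, e) r) = r"
  using redc_inv[of r "(a, e)"] by auto

lemma rd_redc: "rd r \<Longrightarrow> fst l \<noteq> Bg \<Longrightarrow> rd (redc l r)"
  by (cases r) (auto simp: rd_def nc_def successively_Cons)

lemma nc_sig[simp]: "nc (sig a) (sig b) = nc a b" "nc (sgi a) (sgi b) = nc a b"
  unfolding nc_def by (metis sig_linv sig_inj)+

lemma rd_map: "rd r \<Longrightarrow> rd (map sig r)" "rd r \<Longrightarrow> rd (map sgi r)"
  by (auto simp: rd_def successively_map)

lemma map_redc: "map sig (redc l r) = redc (sig l) (map sig r)" "map sgi (redc l r) = redc (sgi l) (map sgi r)"
  by (cases r; auto)+

lemma rd_stX: "rd (snd s) \<Longrightarrow> rd (snd (stX s l))"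
  by (cases s, cases l, rename_tac n r a e, case_tac a) (auto simp: rd_map rd_redc)

lemma stX_canc: "rd (snd s) \<Longrightarrow> stX (stX s l) (linv l) = s"
  by (cases s, cases l, rename_tac n r a e, case_tac a) (auto simp: redc_inv3)

lemma foldl_rd: "rd (snd s) \<Longrightarrow> rd (snd (foldl stX s w))"
  by (induction w arbitrary: s) (auto simp: rd_stX)

lemma act_fold_pres:
  assumes pres: "\<And>s l. P s \<Longrightarrow> P (st s l)"
  shows "P s \<Longrightarrow> P (foldl st s w)"
  by (induction w arbitrary: s) (auto simp: pres)

lemma act_inv:
  fixes st :: "'s \<Rightarrow> 'g \<times> bool \<Rightarrow> 's"
  assumes pres: "\<And>s l. P s \<Longrightarrow> P (st s l)"
    and canc: "\<And>s l. P s \<Longrightarrow> st (st s l) (linv l) = s"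
    and rel: "\<And>s r. P s \<Longrightarrow> r \<in> R \<Longrightarrow> foldl st s r = s"
  shows "pres_eq R u v \<Longrightarrow> P s \<Longrightarrow> foldl st s u = foldl st s v"
proof (induction arbitrary: s rule: pres_eq.induct)
  case (cancel u g e v)
  have "P (foldl st s u)" using act_fold_pres[where P=P and st=st, OF pres cancel] .
  from canc[OF this, of "(g, e)"] show ?case by simp
next
  case (relator r u v)
  have "P (foldl st s u)" using act_fold_pres[where P=P and st=st, OF pres relator(2)] .
  from rel[OF this relator(1)] show ?case by simp
qed auto

lemma stX_rel: "rd (snd s) \<Longrightarrow> r \<in> relG1 \<Longrightarrow> foldl stX s r = s"
  by (cases s) (auto simp: relG1_def map_redc rd_map redc_inv2)

lemma inv_G1: "pres_eq relG1 u v \<Longrightarrow> rd (snd s) \<Longrightarrow> foldl stX s u = foldl stX s v"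
  by (rule act_inv[where P = "\<lambda>s. rd (snd s)" and st = stX, OF rd_stX stX_canc stX_rel])




lemma cb0: "pres_eq relG1 [(A0, False), (Bg, False)] [(Bg, False), (Am1, False)]"
  by (rule pe_byL[where L="[([], False, [(A0, False), (Bg, False), (Am1, True), (Bg, True)])]"]) (simp_all add: relG1_def cjw_def)

lemma cb1: "pres_eq relG1 [(A0, False), (Bg, True)] [(Bg, True), (Am2, True)]"
  by (rule pe_byL[where L="[([(A0, False), (Bg, True)], False, [(Am2, False), (Bg, False), (A0, False), (Bg, True)])]"]) (simp_all add: relG1_def cjw_def)

lemma cb2: "pres_eq relG1 [(Am1, False), (Bg, False)] [(Bg, False), (Am2, False)]"
  by (rule pe_byL[where L="[([], False, [(Am1, False), (Bg, False), (Am2, True), (Bg, True)])]"]) (simp_all add: relG1_def cjw_def)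

lemma cb3: "pres_eq relG1 [(Am1, False), (Bg, True)] [(Bg, True), (A0, False)]"
  by (rule pe_byL[where L="[([(Bg, True)], True, [(A0, False), (Bg, False), (Am1, True), (Bg, True)])]"]) (simp_all add: relG1_def cjw_def)

lemma cb4: "pres_eq relG1 [(Am2, False), (Bg, False)] [(Bg, False), (A0, True)]"
  by (rule pe_byL[where L="[([], False, [(Am2, False), (Bg, False), (A0, False), (Bg, True)])]"]) (simp_all add: relG1_def cjw_def)

lemma cb5: "pres_eq relG1 [(Am2, False), (Bg, True)] [(Bg, True), (Am1, False)]"
  by (rule pe_byL[where L="[([(Bg, True)], True, [(Am1, False), (Bg, False), (Am2, True), (Bg, True)])]"]) (simp_all add: relG1_def cjw_def)

lemma cb6: "pres_eq relG1 [(A0, True), (Bg, False)] [(Bg, False), (Am1, True)]"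
  by (rule pe_byL[where L="[([(A0, True)], True, [(A0, False), (Bg, False), (Am1, True), (Bg, True)])]"]) (simp_all add: relG1_def cjw_def)

lemma cb7: "pres_eq relG1 [(A0, True), (Bg, True)] [(Bg, True), (Am2, False)]"
  by (rule pe_byL[where L="[([(Bg, True)], True, [(Am2, False), (Bg, False), (A0, False), (Bg, True)])]"]) (simp_all add: relG1_def cjw_def)

lemma cb8: "pres_eq relG1 [(Am1, True), (Bg, False)] [(Bg, False), (Am2, True)]"
  by (rule pe_byL[where L="[([(Am1, True)], True, [(Am1, False), (Bg, False), (Am2, True), (Bg, True)])]"]) (simp_all add: relG1_def cjw_def)

lemma cb9: "pres_eq relG1 [(Am1, True), (Bg, True)] [(Bg, True), (A0, True)]"
  by (rule pe_byL[where L="[([(Am1, True), (Bg, True)], False, [(A0, False), (Bg, False), (Am1, True), (Bg, True)])]"]) (simp_all add: relG1_def cjw_def)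

lemma cb10: "pres_eq relG1 [(Am2, True), (Bg, False)] [(Bg, False), (A0, False)]"
  by (rule pe_byL[where L="[([(Am2, True)], True, [(Am2, False), (Bg, False), (A0, False), (Bg, True)])]"]) (simp_all add: relG1_def cjw_def)

lemma cb11: "pres_eq relG1 [(Am2, True), (Bg, True)] [(Bg, True), (Am1, True)]"
  by (rule pe_byL[where L="[([(Am2, True), (Bg, True)], False, [(Am1, False), (Bg, False), (Am2, True), (Bg, True)])]"]) (simp_all add: relG1_def cjw_def)

lemma comm_b1: "fst l \<noteq> Bg \<Longrightarrow> pres_eq relG1 [l, (Bg, False)] [(Bg, False), sig l]"
  by (cases l, rename_tac a e, case_tac a; case_tac e; simp add: cb0 cb2 cb4 cb6 cb8 cb10)
lemma comm_b2: "fst l \<noteq> Bg \<Longrightarrow> pres_eq relG1 [l, (Bg, True)] [(Bg, True), sgi l]"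
  by (cases l, rename_tac a e, case_tac a; case_tac e; simp add: cb1 cb3 cb5 cb7 cb9 cb11)

lemma comm_bw1: "\<forall>l\<in>set w. fst l \<noteq> Bg \<Longrightarrow> pres_eq relG1 (w @ [(Bg, False)]) ((Bg, False) # map sig w)"
proof (induction w)
  case (Cons l w)
  have "pres_eq relG1 ([l] @ (w @ [(Bg, False)])) ([l] @ ((Bg, False) # map sig w))"
    using Cons by (intro pe_app) auto
  also have "\<dots> = [l, (Bg, False)] @ map sig w" by simp
  also have "pres_eq relG1 \<dots> ([(Bg, False), sig l] @ map sig w)"
    using Cons comm_b1 by (intro pe_app) auto
  finally show ?case by simp
qed simp

lemma comm_bw2: "\<forall>l\<in>set w. fst l \<noteq> Bg \<Longrightarrow> pres_eq relG1 (w @ [(Bg, True)]) ((Bg, True) # map sgi w)"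
proof (induction w)
  case (Cons l w)
  have "pres_eq relG1 ([l] @ (w @ [(Bg, True)])) ([l] @ ((Bg, True) # map sgi w))"
    using Cons by (intro pe_app) auto
  also have "\<dots> = [l, (Bg, True)] @ map sgi w" by simp
  also have "pres_eq relG1 \<dots> ([(Bg, True), sgi l] @ map sgi w)"
    using Cons comm_b2 by (intro pe_app) auto
  finally show ?case by simp
qed simp

definition bword :: "int \<Rightarrow> genG1 word" where
  "bword n = (if 0 \<le> n then replicate (nat n) (Bg, False) else replicate (nat (- n)) (Bg, True))"

lemma bword_succ: "pres_eq relG1 (bword n @ [(Bg, False)]) (bword (n + 1))"
proof (cases "0 \<le> n")
  case True
  then have "nat (n + 1) = Suc (nat n)" by simp
  then show ?thesis using True by (simp add: bword_def replicate_append_same)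
next
  case False
  define k where "k = nat (- n - 1)"
  have k: "nat (- n) = Suc k" "nat (- (n + 1)) = k" using False by (simp_all add: k_def)
  have "bword n @ [(Bg, False)] = replicate k (Bg, True) @ [(Bg, True), linv (Bg, True)] @ []"
    using False k by (simp add: bword_def replicate_append_same[symmetric])
  also have "pres_eq relG1 \<dots> (replicate k (Bg, True) @ [])" by (rule pe_cancel2)
  also have "\<dots> = bword (n + 1)" using False k by (auto simp: bword_def)
  finally show ?thesis .
qed

lemma bword_pred: "pres_eq relG1 (bword n @ [(Bg, True)]) (bword (n - 1))"
proof (cases "0 < n")
  case False
  then have "nat (- (n - 1)) = Suc (nat (- n))" by simp
  then show ?thesis using False by (simp add: bword_def replicate_append_same)
next
  case True
  define k where "k = nat (n - 1)"
  have k: "nat n = Suc k" "nat (n - 1) = k" using True by (simp_all add: k_def)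
  have "bword n @ [(Bg, True)] = replicate k (Bg, False) @ [(Bg, False), linv (Bg, False)] @ []"
    using True k by (simp add: bword_def replicate_append_same[symmetric])
  also have "pres_eq relG1 \<dots> (replicate k (Bg, False) @ [])" by (rule pe_cancel2)
  also have "\<dots> = bword (n - 1)" using True k by (auto simp: bword_def)
  finally show ?thesis .
qed

definition repX :: "int \<times> genG1 word \<Rightarrow> genG1 word" where
  "repX s = bword (fst s) @ rev (snd s)"

lemma rd_noBg: "rd r \<Longrightarrow> \<forall>l\<in>set r. fst l \<noteq> Bg" by (simp add: rd_def)

lemma step_ex: "rd (snd s) \<Longrightarrow> pres_eq relG1 (repX s @ [l]) (repX (stX s l))"
proof -
  assume rd: "rd (snd s)"
  obtain n r where s: "s = (n, r)" by (cases s)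
  obtain a e where l: "l = (a, e)" by (cases l)
  show ?thesis
  proof (cases "a = Bg")
    case True
    show ?thesis
    proof (cases e)
      case True
      have "repX s @ [l] = bword n @ (rev r @ [(Bg, True)])" using s l \<open>a = Bg\<close> True by (simp add: repX_def)
      also have "pres_eq relG1 \<dots> (bword n @ ((Bg, True) # map sgi (rev r)))"
        using rd s by (intro pe_app comm_bw2) (auto simp: rd_def)
      also have "\<dots> = (bword n @ [(Bg, True)]) @ rev (map sgi r)" by (simp add: rev_map)
      also have "pres_eq relG1 \<dots> (bword (n - 1) @ rev (map sgi r))"
        by (intro pe_app bword_pred) auto
      finally show ?thesis using s l \<open>a = Bg\<close> True by (simp add: repX_def)
    next
      case False
      have "repX s @ [l] = bword n @ (rev r @ [(Bg, False)])" using s l \<open>a = Bg\<close> False by (simp add: repX_def)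
      also have "pres_eq relG1 \<dots> (bword n @ ((Bg, False) # map sig (rev r)))"
        using rd s by (intro pe_app comm_bw1) (auto simp: rd_def)
      also have "\<dots> = (bword n @ [(Bg, False)]) @ rev (map sig r)" by (simp add: rev_map)
      also have "pres_eq relG1 \<dots> (bword (n + 1) @ rev (map sig r))"
        by (intro pe_app bword_succ) auto
      finally show ?thesis using s l \<open>a = Bg\<close> False by (simp add: repX_def)
    qed
  next
    case False
    then have st: "stX s l = (n, redc l r)" using s l by (cases a) auto
    show ?thesis
    proof (cases "r \<noteq> [] \<and> hd r = linv l")
      case True
      then obtain r0 where r: "r = linv l # r0" by (cases r) auto
      have "repX s @ [l] = (bword n @ rev r0) @ [linv l, linv (linv l)] @ []"
        using s r by (simp add: repX_def)
      also have "pres_eq relG1 \<dots> ((bword n @ rev r0) @ [])" by (rule pe_cancel2)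
      finally show ?thesis using st r by (simp add: repX_def)
    next
      case False
      then have "redc l r = l # r" by (cases r) auto
      then show ?thesis using st s by (simp add: repX_def)
    qed
  qed
qed

definition stateX :: "genG1 word \<Rightarrow> int \<times> genG1 word" where
  "stateX w = foldl stX (0, []) w"

lemma exist_G1: "pres_eq relG1 w (repX (stateX w)) \<and> rd (snd (stateX w))"
proof (induction w rule: rev_induct)
  case Nil
  then show ?case by (simp add: stateX_def repX_def bword_def rd_def)
next
  case (snoc l w)
  have "pres_eq relG1 (w @ [l]) (repX (stateX w) @ [l])"
    using snoc by (intro pe_app) auto
  also have "pres_eq relG1 \<dots> (repX (stX (stateX w) l))"
    using snoc step_ex by blast
  finally show ?case using snoc rd_stX by (simp add: stateX_def)
qed

lemma decide_G1: "stateX u = stateX v \<Longrightarrow> pres_eq relG1 u v"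
  by (metis exist_G1 pe_sym pe_trans)

lemma stateX_inv: "pres_eq relG1 u v \<Longrightarrow> stateX u = stateX v"
  unfolding stateX_def by (rule inv_G1) (auto simp: rd_def)




lemma succ_nth: "successively P xs \<longleftrightarrow> (\<forall>j. Suc j < length xs \<longrightarrow> P (xs ! j) (xs ! Suc j))"
proof (induction P xs rule: successively.induct)
  case (3 P x y xs)
  have "(\<forall>j. Suc j < length (x # y # xs) \<longrightarrow> P ((x # y # xs) ! j) ((x # y # xs) ! Suc j)) \<longleftrightarrow>
        P x y \<and> (\<forall>j. Suc j < length (y # xs) \<longrightarrow> P ((y # xs) ! j) ((y # xs) ! Suc j))"
    (is "?A \<longleftrightarrow> ?B")
  proof
    assume ?A
    then show ?B by (metis Suc_less_eq length_Cons nth_Cons_Suc zero_less_Suc nth_Cons_0)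
  next
    assume B: ?B
    show ?A
    proof (intro allI impI)
      fix j assume "Suc j < length (x # y # xs)"
      then show "P ((x # y # xs) ! j) ((x # y # xs) ! Suc j)"
        using B by (cases j) auto
    qed
  qed
  then show ?case using 3 by simp
qed auto

lemma normal_rd: "normal_letters as \<longleftrightarrow> rd (rev as)"
proof -
  have "\<And>a b. nc b a = nc a b" using nc_sym by blast
  then have "successively nc (rev as) \<longleftrightarrow> successively nc as" by simp
  moreover have "\<And>a b. nc a b \<longleftrightarrow> \<not> (fst a = fst b \<and> snd a \<noteq> snd b)"
    by (auto simp: nc_def)
  ultimately show ?thesis
    unfolding normal_letters_def rd_def by (simp add: succ_nth)
qed

lemma lp_wc: "letters_prod as = word_class relG1 as"
proof (induction as)
  case Nil
  then show ?case by (simp add: letters_prod_def wc_one)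
next
  case (Cons l as)
  obtain a e where l: "l = (a, e)" by (cases l)
  have "letters_prod (l # as) =
     (if e then inv\<^bsub>grpG1\<^esub> (word_class relG1 [(a, False)]) else word_class relG1 [(a, False)])
        \<otimes>\<^bsub>grpG1\<^esub> letters_prod as"
    using l by (simp add: letters_prod_def)
  also have "\<dots> = word_class relG1 [(a, e)] \<otimes>\<^bsub>grpG1\<^esub> word_class relG1 as"
    using Cons by (simp add: wc_inv)
  finally show ?case using l by simp
qed

lemma wpow_single: "wpow k [x] = replicate k x"
  by (induction k) (auto simp: replicate_append_same)

lemma pow_b: "word_class relG1 [(Bg, False)] [^]\<^bsub>grpG1\<^esub> (n::int) = word_class relG1 (bword n)"
  by (simp add: int_pow_def2 wc_pow wc_inv wpow_single bword_def winv_def)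

lemma fold_bword: "foldl stX (m, []) (bword n) = (m + n, [])"
proof -
  have a: "foldl stX (m, []) (replicate k (Bg, False)) = (m + int k, [])" for k m
    by (induction k arbitrary: m) auto
  have b: "foldl stX (m, []) (replicate k (Bg, True)) = (m - int k, [])" for k m
    by (induction k arbitrary: m) auto
  show ?thesis using a b by (simp add: bword_def)
qed

lemma fold_normal: "\<forall>l\<in>set as. fst l \<noteq> Bg \<Longrightarrow> rd (rev as @ r) \<Longrightarrow> foldl stX (n, r) as = (n, rev as @ r)"
proof (induction as arbitrary: r)
  case (Cons l as)
  have "redc l r = l # r"
  proof (cases r)
    case (Cons l' r')
    then have "nc l l'" using Cons.prems(2) by (simp add: rd_def successively_append_iff)
    then show ?thesis using Cons by (simp add: nc_def)
  qed simp
  moreover have "stX (n, r) l = (n, redc l r)" using Cons.prems(1)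
    by (cases l, rename_tac a e, case_tac a) auto
  ultimately show ?case using Cons by simp
qed simp

lemma part3: "\<forall>g \<in> carrier grpG1. \<exists>!(n, as). normal_letters as \<and>
            g = (word_class relG1 [(Bg, False)]) [^]\<^bsub>grpG1\<^esub> (n::int) \<otimes>\<^bsub>grpG1\<^esub> letters_prod as"
proof
  fix g assume "g \<in> carrier grpG1"
  then obtain w where g: "g = word_class relG1 w" using carrier_wc by blast
  have eq: "(word_class relG1 [(Bg, False)]) [^]\<^bsub>grpG1\<^esub> (n::int) \<otimes>\<^bsub>grpG1\<^esub> letters_prod as
      = word_class relG1 (bword n @ as)" for n as
    by (simp add: pow_b lp_wc)
  obtain n r where st: "stateX w = (n, r)" by (cases "stateX w")
  have ex: "pres_eq relG1 w (bword n @ rev r)" "rd r"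
    using exist_G1[of w] st by (auto simp: repX_def)
  show "\<exists>!(n, as). normal_letters as \<and>
            g = (word_class relG1 [(Bg, False)]) [^]\<^bsub>grpG1\<^esub> (n::int) \<otimes>\<^bsub>grpG1\<^esub> letters_prod as"
  proof (rule ex1I[of _ "(n, rev r)"])
    show "case (n, rev r) of (n, as) \<Rightarrow> normal_letters as \<and>
            g = (word_class relG1 [(Bg, False)]) [^]\<^bsub>grpG1\<^esub> (n::int) \<otimes>\<^bsub>grpG1\<^esub> letters_prod as"
      using ex g by (simp add: eq normal_rd wc_eq)
  next
    fix p assume "case p of (n, as) \<Rightarrow> normal_letters as \<and>
            g = (word_class relG1 [(Bg, False)]) [^]\<^bsub>grpG1\<^esub> (n::int) \<otimes>\<^bsub>grpG1\<^esub> letters_prod as"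
    moreover obtain n' as' where p: "p = (n', as')" by (cases p)
    ultimately have nl: "normal_letters as'" and pe: "pres_eq relG1 w (bword n' @ as')"
      using g by (auto simp: eq wc_eq)
    have rd': "rd (rev as')" using nl normal_rd by blast
    have "stateX (bword n' @ as') = (n', rev as')"
      unfolding stateX_def using fold_bword[of 0 n'] fold_normal[of as' "[]" n'] rd'
      by (simp add: rd_def)
    moreover have "stateX w = stateX (bword n' @ as')" using pe by (rule stateX_inv)
    ultimately show "p = (n, rev r)" using st p by simp
  qed
qed




fun cmap :: "genC \<Rightarrow> genG1" where "cmap Ca = A0" | "cmap Cb = Bg"

definition stC :: "int \<times> genG1 word \<Rightarrow> genC \<times> bool \<Rightarrow> int \<times> genG1 word" where
  "stC s l = stX s (cmap (fst l), snd l)"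

lemma stC_simps[simp]: "stC s (Ca, e) = stX s (A0, e)" "stC s (Cb, e) = stX s (Bg, e)"
  by (simp_all add: stC_def)

lemma stC_rel: "rd (snd s) \<Longrightarrow> r \<in> relC \<Longrightarrow> foldl stC s r = s"
  by (cases s) (auto simp: relC_def map_redc rd_map redc_inv2 simp del: map_map)

lemma inv_C: "pres_eq relC u v \<Longrightarrow> rd (snd s) \<Longrightarrow> foldl stC s u = foldl stC s v"
proof (rule act_inv[where P = "\<lambda>s. rd (snd s)" and st = stC])
  show "\<And>s l. rd (snd s) \<Longrightarrow> rd (snd (stC s l))" by (simp add: stC_def rd_stX)
  show "\<And>s l. rd (snd s) \<Longrightarrow> stC (stC s l) (linv l) = s"
    using stX_canc by (simp add: stC_def) (metis linv.simps prod.collapse)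
  show "\<And>s r. rd (snd s) \<Longrightarrow> r \<in> relC \<Longrightarrow> foldl stC s r = s" by (rule stC_rel)
qed

definition gh0 :: "genC \<Rightarrow> genG1 word" where "gh0 c = [(cmap c, False)]"

fun gk0 :: "genG1 \<Rightarrow> genC word" where
  "gk0 A0 = [(Ca, False)]"
| "gk0 Am1 = [(Cb, True), (Ca, False), (Cb, False)]"
| "gk0 Am2 = [(Cb, True), (Cb, True), (Ca, False), (Cb, False), (Cb, False)]"
| "gk0 Bg = [(Cb, False)]"

lemma relC_h: "\<forall>r\<in>relC. pres_eq relG1 (wmap (lett gh0) r) []"
  by (auto simp: relC_def intro!: decide_G1) (simp add: stateX_def lett_def gh0_def)

lemma relG1_k: "\<forall>r\<in>relG1. pres_eq relC (wmap (lett gk0) r) []"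
proof -
  have r3: "pres_eq relC (wmap (lett gk0) [(Am2, False), (Bg, False), (A0, False), (Bg, True)]) []"
    by (rule pe_byL[where L="[([(Cb, False), (Ca, True)], False, [(Ca, False), (Cb, True), (Cb, True), (Cb, True),
            (Ca, False), (Cb, True), (Cb, True), (Cb, True),
            (Cb, False), (Cb, False), (Cb, False), (Cb, False), (Cb, False), (Cb, False)])]"])
       (simp_all add: relC_def cjw_def lett_def)
  show ?thesis
    using r3 by (auto simp: relG1_def intro!: pe_free) (simp_all add: lett_def)
qed

abbreviation "hC \<equiv> indh relC relG1 (lett gh0)"
abbreviation "kC \<equiv> indh relG1 relC (lett gk0)"

lemma kh_letter: "wmap (lett gk0) (lett gh0 l) = [l]"
  by (cases l, rename_tac c e, case_tac c; case_tac e; simp add: lett_def gh0_def)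

lemma kh_word: "wmap (lett gk0) (wmap (lett gh0) u) = u"
  by (induction u) (simp_all add: kh_letter)

lemma hk_letter: "pres_eq relG1 (wmap (lett gh0) (lett gk0 l)) [l]"
  by (cases l, rename_tac a e, case_tac a; case_tac e; rule decide_G1; simp add: stateX_def lett_def gh0_def)

lemma hk_word: "pres_eq relG1 (wmap (lett gh0) (wmap (lett gk0) v)) v"
proof (induction v)
  case (Cons l v)
  have "wmap (lett gh0) (wmap (lett gk0) (l # v)) = wmap (lett gh0) (lett gk0 l) @ wmap (lett gh0) (wmap (lett gk0) v)"
    by simp
  also have "pres_eq relG1 \<dots> ([l] @ v)" using Cons hk_letter by (intro pe_app)
  finally show ?case by simp
qed simp

lemma part2: "\<exists>h \<in> iso grpC grpG1.
            h (word_class relC [(Ca, False)]) = word_class relG1 [(A0, False)]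
          \<and> h (word_class relC [(Cb, False)]) = word_class relG1 [(Bg, False)]"
proof (rule bexI[of _ hC])
  show "hC (word_class relC [(Ca, False)]) = word_class relG1 [(A0, False)] \<and>
        hC (word_class relC [(Cb, False)]) = word_class relG1 [(Bg, False)]"
    by (simp add: indh_wc[OF relC_h] lett_def gh0_def)
  have hom: "hC \<in> hom grpC grpG1" by (rule indh_hom[OF relC_h])
  have bij: "bij_betw hC (carrier grpC) (carrier grpG1)"
  proof (rule bij_betw_byWitness[where f' = kC])
    show "\<forall>a\<in>carrier grpC. kC (hC a) = a"
      by (auto dest!: carrier_wc simp: indh_wc[OF relC_h] indh_wc[OF relG1_k] kh_word)
    show "\<forall>a\<in>carrier grpG1. hC (kC a) = a"
    proof
      fix a assume "a \<in> carrier grpG1"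
      then obtain w where w: "a = word_class relG1 w" using carrier_wc by blast
      have "word_class relG1 (wmap (lett gh0) (wmap (lett gk0) w)) = word_class relG1 w"
        using hk_word wc_eq by blast
      then show "hC (kC a) = a" using w by (simp add: indh_wc[OF relC_h] indh_wc[OF relG1_k])
    qed
    show "hC ` carrier grpC \<subseteq> carrier grpG1" using hom by (auto simp: hom_def)
    show "kC ` carrier grpG1 \<subseteq> carrier grpC" using indh_hom[OF relG1_k] by (auto simp: hom_def)
  qed
  show "hC \<in> iso grpC grpG1" using hom bij by (simp add: iso_def)
qed




abbreviation "rG \<equiv> [(Gx, False), (Gx, False), (Gy, False), (Gy, False), (Gy, False)]"
abbreviation "xg \<equiv> (Gx, False)"
abbreviation "Xg \<equiv> (Gx, True)"
abbreviation "yg \<equiv> (Gy, False)"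
abbreviation "Yg \<equiv> (Gy, True)"

lemma rG_in: "rG \<in> relG" by (simp add: relG_def)

lemma d_yyy: "pres_eq relG [yg, yg, yg] [Xg, Xg]"
  by (rule pe_byL[where L="[([Xg, Xg], False, rG)]"]) (simp_all add: relG_def cjw_def)
lemma d_Y: "pres_eq relG [Yg] [yg, yg, xg, xg]"
  by (rule pe_byL[where L="[([yg, yg], True, rG)]"]) (simp_all add: relG_def cjw_def)
lemma d_X: "pres_eq relG [Xg] [xg, Xg, Xg]"
  by (rule pe_free) simp

lemma cxx_letter: "pres_eq relG [l, xg, xg] [xg, xg, l]"
proof -
  obtain g e where l: "l = (g, e)" by (cases l)
  have 1: "pres_eq relG [yg, xg, xg] [xg, xg, yg]"
    by (rule pe_byL[where L="[([yg], False, rG), ([], True, rG)]"]) (simp_all add: relG_def cjw_def)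
  have 2: "pres_eq relG [Yg, xg, xg] [xg, xg, Yg]"
    by (rule pe_byL[where L="[([], True, rG), ([xg, xg, yg, yg], False, rG)]"]) (simp_all add: relG_def cjw_def)
  have 3: "pres_eq relG [Xg, xg, xg] [xg, xg, Xg]"
    by (rule pe_free) simp
  show ?thesis using l 1 2 3 by (cases g; cases e) auto
qed

lemma cXX_letter: "pres_eq relG [l, Xg, Xg] [Xg, Xg, l]"
proof -
  obtain g e where l: "l = (g, e)" by (cases l)
  have 1: "pres_eq relG [yg, Xg, Xg] [Xg, Xg, yg]"
    by (rule pe_byL[where L="[([Xg, Xg], False, rG), ([Xg, Xg, yg], True, rG)]"]) (simp_all add: relG_def cjw_def)
  have 2: "pres_eq relG [Yg, Xg, Xg] [Xg, Xg, Yg]"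
    by (rule pe_byL[where L="[([Xg, Xg], False, rG), ([Xg, Xg, Yg], True, rG)]"]) (simp_all add: relG_def cjw_def)
  have 3: "pres_eq relG [xg, Xg, Xg] [Xg, Xg, xg]"
    by (rule pe_free) simp
  show ?thesis using l 1 2 3 by (cases g; cases e) auto
qed

lemma central_gen:
  assumes "\<And>l. pres_eq relG ([l] @ z) (z @ [l])"
  shows "pres_eq relG (w @ z) (z @ w)"
proof (induction w)
  case (Cons l w)
  have "(l # w) @ z = [l] @ (w @ z)" by simp
  also have "pres_eq relG \<dots> ([l] @ (z @ w))" using Cons by (rule pe_app_left)
  also have "\<dots> = ([l] @ z) @ w" by simp
  also have "pres_eq relG \<dots> ((z @ [l]) @ w)" using assms by (rule pe_app_right)
  finally show ?case by simp
qed simp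

lemma central_xx: "pres_eq relG (w @ [xg, xg]) ([xg, xg] @ w)"
  by (rule central_gen) (simp add: cxx_letter)
lemma central_XX: "pres_eq relG (w @ [Xg, Xg]) ([Xg, Xg] @ w)"
  by (rule central_gen) (simp add: cXX_letter)

definition zword :: "int \<Rightarrow> genG word" where
  "zword m = (if 0 \<le> m then wpow (nat m) [xg, xg] else wpow (nat (- m)) [Xg, Xg])"

lemma z_up: "pres_eq relG (zword m @ [xg, xg]) (zword (m + 1))"
proof (cases "0 \<le> m")
  case True
  then have "nat (m + 1) = Suc (nat m)" by simp
  then show ?thesis using True by (simp add: zword_def)
next
  case False
  define k where "k = nat (- m - 1)"
  have k: "nat (- m) = Suc k" using False by (simp add: k_def)
  have z1: "zword (m + 1) = wpow k [Xg, Xg]"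
    using False k by (cases "m + 1 = 0") (auto simp: zword_def k_def)
  have "zword m @ [xg, xg] = wpow k [Xg, Xg] @ [Xg, Xg, xg, xg]" using False k by (simp add: zword_def)
  also have "pres_eq relG \<dots> (wpow k [Xg, Xg] @ [])" by (rule pe_app_left, rule pe_free) simp
  finally show ?thesis using z1 by simp
qed

lemma z_down: "pres_eq relG (zword m @ [Xg, Xg]) (zword (m - 1))"
proof (cases "0 < m")
  case False
  then have "nat (- (m - 1)) = Suc (nat (- m))" by simp
  then show ?thesis using False by (simp add: zword_def)
next
  case True
  define k where "k = nat (m - 1)"
  have k: "nat m = Suc k" using True by (simp add: k_def)
  have z1: "zword (m - 1) = wpow k [xg, xg]"
    using True k by (auto simp: zword_def k_def)
  have "zword m @ [Xg, Xg] = wpow k [xg, xg] @ [xg, xg, Xg, Xg]" using True k by (simp add: zword_def)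
  also have "pres_eq relG \<dots> (wpow k [xg, xg] @ [])" by (rule pe_app_left, rule pe_free) simp
  finally show ?thesis using z1 by simp
qed

fun sword :: "nat list \<Rightarrow> genG word" where
  "sword [] = []"
| "sword [e] = replicate e yg"
| "sword (e # e' # r) = sword (e' # r) @ xg # replicate e yg"

definition reprG :: "int \<times> nat list \<Rightarrow> genG word" where
  "reprG s = zword (fst s) @ sword (snd s)"

lemma repr_xx: "pres_eq relG (reprG (m, r) @ [xg, xg]) (reprG (m + 1, r))"
proof -
  have "reprG (m, r) @ [xg, xg] = zword m @ (sword r @ [xg, xg])" by (simp add: reprG_def)
  also have "pres_eq relG \<dots> (zword m @ ([xg, xg] @ sword r))" by (intro pe_app central_xx) auto
  also have "\<dots> = (zword m @ [xg, xg]) @ sword r" by simp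
  also have "pres_eq relG \<dots> (zword (m + 1) @ sword r)" by (intro pe_app z_up) auto
  finally show ?thesis by (simp add: reprG_def)
qed

lemma repr_XX: "pres_eq relG (reprG (m, r) @ [Xg, Xg]) (reprG (m - 1, r))"
proof -
  have "reprG (m, r) @ [Xg, Xg] = zword m @ (sword r @ [Xg, Xg])" by (simp add: reprG_def)
  also have "pres_eq relG \<dots> (zword m @ ([Xg, Xg] @ sword r))" by (intro pe_app central_XX) auto
  also have "\<dots> = (zword m @ [Xg, Xg]) @ sword r" by simp
  also have "pres_eq relG \<dots> (zword (m - 1) @ sword r)" by (intro pe_app z_down) auto
  finally show ?thesis by (simp add: reprG_def)
qed

fun vI :: "nat list \<Rightarrow> bool" where
  "vI [] = True"
| "vI [e] = (e \<le> 2)"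
| "vI (e # e' # r) = (0 < e \<and> e \<le> 2 \<and> vI (e' # r))"

fun vG :: "nat list \<Rightarrow> bool" where
  "vG [] = False"
| "vG (e # r) = (e \<le> 2 \<and> vI r)"

fun sx :: "int \<times> nat list \<Rightarrow> int \<times> nat list" where
  "sx (m, []) = (m, [0])"
| "sx (m, e # r) = (if e = 0 \<and> r \<noteq> [] then (m + 1, r) else (m, 0 # e # r))"

fun sy :: "int \<times> nat list \<Rightarrow> int \<times> nat list" where
  "sy (m, []) = (m, [])"
| "sy (m, e # r) = (if e < 2 then (m, Suc e # r) else (m - 1, 0 # r))"

lemma vG_sx: "vG (snd s) \<Longrightarrow> vG (snd (sx s))"
proof -
  obtain m r where s: "s = (m, r)" by (cases s)
  assume "vG (snd s)"
  then obtain e r' where r: "r = e # r'" "e \<le> 2" "vI r'" using s by (cases r) auto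
  show ?thesis
  proof (cases "e = 0 \<and> r' \<noteq> []")
    case True
    then show ?thesis using s r by (cases r'; cases "tl r'") auto
  next
    case False
    then show ?thesis using s r by (cases r'; cases "tl r'") auto
  qed
qed

lemma vG_sy: "vG (snd s) \<Longrightarrow> vG (snd (sy s))"
proof -
  obtain m r where s: "s = (m, r)" by (cases s)
  assume "vG (snd s)"
  then obtain e r' where r: "r = e # r'" "e \<le> 2" "vI r'" using s by (cases r) auto
  then show ?thesis using s by auto
qed

lemma sx_step: "vG (snd s) \<Longrightarrow> pres_eq relG (reprG s @ [xg]) (reprG (sx s))"
proof -
  obtain m r where s: "s = (m, r)" by (cases s)
  assume "vG (snd s)"
  then obtain e r' where r: "r = e # r'" "e \<le> 2" "vI r'" using s by (cases r) auto
  show ?thesis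
  proof (cases "e = 0 \<and> r' \<noteq> []")
    case True
    then obtain e' r'' where r': "r' = e' # r''" by (cases r') auto
    have "reprG s @ [xg] = reprG (m, r') @ [xg, xg]" using s r r' True by (simp add: reprG_def)
    also have "pres_eq relG \<dots> (reprG (m + 1, r'))" by (rule repr_xx)
    finally show ?thesis using s r True by simp
  next
    case False
    then show ?thesis using s r by (cases r') (simp_all add: reprG_def)
  qed
qed

lemma sword_suc: "sword (Suc e # r) = sword (e # r) @ [yg]"
  by (cases r) (simp_all add: replicate_append_same)

lemma sy_step: "vG (snd s) \<Longrightarrow> pres_eq relG (reprG s @ [yg]) (reprG (sy s))"
proof -
  obtain m r where s: "s = (m, r)" by (cases s)
  assume "vG (snd s)"
  then obtain e r' where r: "r = e # r'" "e \<le> 2" "vI r'" using s by (cases r) auto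
  show ?thesis
  proof (cases "e < 2")
    case True
    then show ?thesis using s r by (simp add: reprG_def sword_suc)
  next
    case False
    then have e2: "e = 2" using r by simp
    have "reprG s @ [yg] = reprG (m, 0 # r') @ [yg, yg, yg]"
      using s r e2 by (simp add: reprG_def numeral_2_eq_2 sword_suc)
    also have "pres_eq relG \<dots> (reprG (m, 0 # r') @ [Xg, Xg])" by (intro pe_app d_yyy) auto
    also have "pres_eq relG \<dots> (reprG (m - 1, 0 # r'))" by (rule repr_XX)
    finally show ?thesis using s r e2 by simp
  qed
qed

definition stG :: "int \<times> nat list \<Rightarrow> genG \<times> bool \<Rightarrow> int \<times> nat list" where
  "stG s l = (if fst l = Gx then (if snd l then (fst (sx s) - 1, snd (sx s)) else sx s)
              else (if snd l then (fst (sy (sy s)) + 1, snd (sy (sy s))) else sy s))"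

lemma vG_stG: "vG (snd s) \<Longrightarrow> vG (snd (stG s l))"
  by (auto simp: stG_def vG_sx vG_sy)

lemma stG_step: "vG (snd s) \<Longrightarrow> pres_eq relG (reprG s @ [l]) (reprG (stG s l))"
proof -
  assume v: "vG (snd s)"
  obtain g e where l: "l = (g, e)" by (cases l)
  show ?thesis
  proof (cases g)
    case Gx
    show ?thesis
    proof (cases e)
      case True
      have "pres_eq relG (reprG s @ [Xg]) (reprG s @ [xg] @ [Xg, Xg])" using d_X by (intro pe_app) auto
      also have "pres_eq relG \<dots> (reprG (sx s) @ [Xg, Xg])"
        using sx_step[OF v] pe_app by (metis append_assoc pe_refl)
      also have "pres_eq relG \<dots> (reprG (fst (sx s) - 1, snd (sx s)))"
        using repr_XX[of "fst (sx s)" "snd (sx s)"] by simp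
      finally show ?thesis using l Gx True by (simp add: stG_def)
    next
      case False
      then show ?thesis using l Gx sx_step[OF v] by (simp add: stG_def)
    qed
  next
    case Gy
    show ?thesis
    proof (cases e)
      case True
      have v2: "vG (snd (sy s))" using v by (rule vG_sy)
      have "pres_eq relG (reprG s @ [Yg]) (reprG s @ [yg] @ [yg, xg, xg])" using d_Y by (intro pe_app) auto
      also have "pres_eq relG \<dots> (reprG (sy s) @ [yg] @ [xg, xg])"
        using sy_step[OF v] pe_app by (metis append_assoc pe_refl append_Cons append_Nil)
      also have "pres_eq relG \<dots> (reprG (sy (sy s)) @ [xg, xg])"
        using sy_step[OF v2] pe_app by (metis append_assoc pe_refl)
      also have "pres_eq relG \<dots> (reprG (fst (sy (sy s)) + 1, snd (sy (sy s))))"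
        using repr_xx[of "fst (sy (sy s))" "snd (sy (sy s))"] by simp
      finally show ?thesis using l Gy True by (simp add: stG_def)
    next
      case False
      then show ?thesis using l Gy sy_step[OF v] by (simp add: stG_def)
    qed
  qed
qed

definition stateG :: "genG word \<Rightarrow> int \<times> nat list" where
  "stateG w = foldl stG (0, [0]) w"

lemma exist_G: "pres_eq relG w (reprG (stateG w)) \<and> vG (snd (stateG w))"
proof (induction w rule: rev_induct)
  case Nil
  then show ?case by (simp add: stateG_def reprG_def zword_def)
next
  case (snoc l w)
  have "pres_eq relG (w @ [l]) (reprG (stateG w) @ [l])"
    using snoc by (intro pe_app) auto
  also have "pres_eq relG \<dots> (reprG (stG (stateG w) l))"
    using snoc stG_step by blast
  finally show ?case using snoc vG_stG by (simp add: stateG_def)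
qed




fun phi0 :: "genG \<Rightarrow> genC word" where
  "phi0 Gx = [(Ca, False), (Cb, True), (Cb, True), (Cb, True)]"
| "phi0 Gy = [(Cb, False), (Cb, False)]"

lemma relG_phi: "\<forall>r\<in>relG. pres_eq relC (wmap (lett phi0) r) []"
  by (auto simp: relG_def relC_def lett_def intro!: pe_rel)

definition iota :: "int \<times> nat list \<Rightarrow> int \<times> genG1 word" where
  "iota s = foldl stC (0, []) (wmap (lett phi0) (reprG s))"

lemma state_iota: "foldl stC (0, []) (wmap (lett phi0) w) = iota (stateG w)"
  unfolding iota_def
  by (rule inv_C[OF pe_wmap[OF relG_phi]]) (auto simp: exist_G rd_def)

lemma stX_shift: "stX (n + d, w) l = (fst (stX (n, w) l) + d, snd (stX (n, w) l))"
  by (cases l, rename_tac a e, case_tac a) auto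

lemma foldC_shift: "foldl stC (n + d, w) u = (fst (foldl stC (n, w) u) + d, snd (foldl stC (n, w) u))"
proof (induction u arbitrary: n w)
  case (Cons l u)
  have "stC (n + d, w) l = (fst (stC (n, w) l) + d, snd (stC (n, w) l))"
    by (simp add: stC_def stX_shift)
  then have "foldl stC (n + d, w) (l # u) = foldl stC (fst (stC (n, w) l) + d, snd (stC (n, w) l)) u" by simp
  also have "\<dots> = (fst (foldl stC (stC (n, w) l) u) + d, snd (foldl stC (stC (n, w) l) u))"
    using Cons[of "fst (stC (n, w) l)" "snd (stC (n, w) l)"] by simp
  finally show ?case by simp
qed simp

lemma fold_zword: "foldl stC (n, []) (wmap (lett phi0) (zword m)) = (n - 6 * m, [])"
proof -
  have a: "foldl stC (n, []) (wmap (lett phi0) (wpow k [xg, xg])) = (n - 6 * int k, [])" for k n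
    by (induction k arbitrary: n) (simp_all add: lett_def algebra_simps)
  have b: "foldl stC (n, []) (wmap (lett phi0) (wpow k [Xg, Xg])) = (n + 6 * int k, [])" for k n
    by (induction k arbitrary: n) (simp_all add: lett_def algebra_simps)
  show ?thesis using a b by (simp add: zword_def)
qed

definition Fr :: "nat list \<Rightarrow> int \<times> genG1 word" where
  "Fr r = foldl stC (0, []) (wmap (lett phi0) (sword r))"

lemma iota_F: "iota (m, r) = (fst (Fr r) - 6 * m, snd (Fr r))"
proof -
  have "iota (m, r) = foldl stC (0 + (- 6 * m), []) (wmap (lett phi0) (sword r))"
    by (simp add: iota_def reprG_def fold_zword)
  also have "\<dots> = (fst (Fr r) - 6 * m, snd (Fr r))"
    by (subst foldC_shift) (simp add: Fr_def)
  finally show ?thesis .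
qed

fun mp1 :: "nat \<Rightarrow> genG1 \<times> bool \<Rightarrow> genG1 \<times> bool" where
  "mp1 0 = (\<lambda>l. sgi (sgi (sgi l)))"
| "mp1 (Suc 0) = sgi"
| "mp1 (Suc (Suc n)) = sig"

lemma e012: "e \<le> 2 \<Longrightarrow> e = 0 \<or> e = Suc 0 \<or> e = Suc (Suc 0)" for e :: nat by arith

lemma step_xy:
  assumes "e \<le> 2" "w = [] \<or> hd w \<noteq> (A0, True)"
  shows "foldl stC (n, w) (wmap (lett phi0) (xg # replicate e yg)) = (n + 2 * int e - 3, map (mp1 e) ((A0, False) # w))"
proof -
  have r: "redc (A0, False) w = (A0, False) # w" using assms(2) by (cases w) auto
  show ?thesis using e012[OF assms(1)] r
    by (auto simp: lett_def o_def)
qed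

lemma F_single: "e \<le> 2 \<Longrightarrow> Fr [e] = (2 * int e, [])"
  using e012[of e] by (auto simp: Fr_def lett_def)

lemma F_step: "Fr (e # e' # r) = foldl stC (Fr (e' # r)) (wmap (lett phi0) (xg # replicate e yg))"
  unfolding Fr_def by (simp del: wmap_simps(2) add: wmap_simps(3))

lemma vI_vG: "vI (e # r) \<Longrightarrow> vG (e # r)" by (cases r) auto

lemma F_cons_aux:
  assumes "e \<le> 2" "snd (Fr (e' # r)) = [] \<or> hd (snd (Fr (e' # r))) \<noteq> (A0, True)"
  shows "Fr (e # e' # r) = (fst (Fr (e' # r)) + 2 * int e - 3, map (mp1 e) ((A0, False) # snd (Fr (e' # r))))"
proof -
  have "Fr (e # e' # r) = foldl stC (fst (Fr (e' # r)), snd (Fr (e' # r))) (wmap (lett phi0) (xg # replicate e yg))"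
    using F_step[of e e' r] by simp
  also have "\<dots> = (fst (Fr (e' # r)) + 2 * int e - 3, map (mp1 e) ((A0, False) # snd (Fr (e' # r))))"
    by (rule step_xy[OF assms])
  finally show ?thesis .
qed

lemma F_cons: "vG (e # e' # r) \<Longrightarrow>
    Fr (e # e' # r) = (fst (Fr (e' # r)) + 2 * int e - 3, map (mp1 e) ((A0, False) # snd (Fr (e' # r))))"
proof (induction r arbitrary: e e')
  case Nil
  then have "Fr [e'] = (2 * int e', [])" by (intro F_single) auto
  then show ?case using Nil by (intro F_cons_aux) auto
next
  case (Cons e'' r)
  then have v0: "vI (e' # e'' # r)" "0 < e'" "e' \<le> 2" "e \<le> 2" by auto
  then have v: "vG (e' # e'' # r)" using vI_vG by blast
  have IH: "Fr (e' # e'' # r) = (fst (Fr (e'' # r)) + 2 * int e' - 3, map (mp1 e') ((A0, False) # snd (Fr (e'' # r))))"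
    using Cons.IH[OF v] .
  have "mp1 e' (A0, False) \<noteq> (A0, True)" using e012[OF v0(3)] v0(2) by auto
  then have hd: "snd (Fr (e' # e'' # r)) = [] \<or> hd (snd (Fr (e' # e'' # r))) \<noteq> (A0, True)"
    using IH by simp
  show ?case by (rule F_cons_aux[OF v0(4) hd])
qed

lemma F_len: "vG r \<Longrightarrow> length (snd (Fr r)) = length r - 1"
proof (induction r)
  case (Cons e r)
  show ?case
  proof (cases "r = []")
    case True
    then show ?thesis using Cons F_single by simp
  next
    case False
    then obtain e' r' where Cons1: "r = e' # r'" by (cases r) auto
    have "vI (e' # r')" using Cons.prems Cons1 by simp
    then have "vG (e' # r')" by (rule vI_vG)
    then show ?thesis using Cons Cons1 F_cons by simp
  qed
qed simp

lemma inj_mp1: "inj (mp1 e)"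
proof (cases e)
  case 0
  then show ?thesis by (simp add: inj_def)
next
  case (Suc n)
  then show ?thesis by (cases n) (simp_all add: inj_def)
qed

lemma mp1_a0: "e \<le> 2 \<Longrightarrow> e' \<le> 2 \<Longrightarrow> mp1 e (A0, False) = mp1 e' (A0, False) \<Longrightarrow> e = e'"
  using e012[of e] e012[of e'] by auto

lemma iota_inj: "vG r \<Longrightarrow> vG r' \<Longrightarrow> fst (Fr r) - 6 * m = fst (Fr r') - 6 * m' \<Longrightarrow> snd (Fr r) = snd (Fr r')
   \<Longrightarrow> m = m' \<and> r = r'"
proof (induction r arbitrary: r' m m')
  case (Cons e r)
  note pr = Cons.prems
  show ?case
  proof (cases "r = []")
    case True
    note Nil = True
    have Fe: "Fr [e] = (2 * int e, [])" using pr Nil F_single by simp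
    have "length r' - 1 = 0" using pr Nil Fe F_len[of r'] by simp
    moreover have "r' \<noteq> []" using pr by auto
    ultimately obtain e' where r': "r' = [e']" by (cases r'; cases "tl r'") auto
    have Fe': "Fr [e'] = (2 * int e', [])" using pr r' F_single by simp
    have "2 * int e - 6 * m = 2 * int e' - 6 * m'" "e \<le> 2" "e' \<le> 2" using pr Nil r' Fe Fe' by auto
    then have "m = m' \<and> e = e'" by presburger
    then show ?thesis using Nil r' by simp
  next
    case False
    then obtain e1 r1 where Cons1: "r = e1 # r1" by (cases r) auto
    have "length (snd (Fr r')) = length r1 + 1" using pr(1) pr(4) Cons1 F_len[of "e # r"] by simp
    then have "length r' \<ge> 2" using F_len[of r'] pr(2) by simp
    then obtain e' e1' r1' where r': "r' = e' # e1' # r1'" by (cases r'; cases "tl r'") auto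
    have v0: "vI (e1 # r1)" "vI (e1' # r1')" "e \<le> 2" "e' \<le> 2"
      using pr(1) pr(2) Cons1 r' by auto
    have v: "vG (e1 # r1)" "vG (e1' # r1')" "e \<le> 2" "e' \<le> 2"
      using vI_vG[OF v0(1)] vI_vG[OF v0(2)] v0(3,4) by auto
    have F1: "Fr (e # e1 # r1) = (fst (Fr (e1 # r1)) + 2 * int e - 3, map (mp1 e) ((A0, False) # snd (Fr (e1 # r1))))"
      using F_cons[of e e1 r1] pr(1) Cons1 by blast
    have F2: "Fr (e' # e1' # r1') = (fst (Fr (e1' # r1')) + 2 * int e' - 3, map (mp1 e') ((A0, False) # snd (Fr (e1' # r1'))))"
      using F_cons[of e' e1' r1'] pr(2) r' by blast
    have "map (mp1 e) ((A0, False) # snd (Fr (e1 # r1))) = map (mp1 e') ((A0, False) # snd (Fr (e1' # r1')))"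
      using pr(4) F1 F2 Cons1 r' by simp
    then have m1: "mp1 e (A0, False) = mp1 e' (A0, False)" "map (mp1 e) (snd (Fr (e1 # r1))) = map (mp1 e') (snd (Fr (e1' # r1')))"
      by simp_all
    have ee: "e = e'" using mp1_a0[OF v(3) v(4) m1(1)] .
    have sn: "snd (Fr (e1 # r1)) = snd (Fr (e1' # r1'))"
      using m1(2) ee inj_mp1[of e] by simp
    have fs: "fst (Fr (e1 # r1)) - 6 * m = fst (Fr (e1' # r1')) - 6 * m'"
      using pr(3) F1 F2 Cons1 r' ee by simp
    have vr: "vG r" using v(1) Cons1 by simp
    have fs': "fst (Fr r) - 6 * m = fst (Fr (e1' # r1')) - 6 * m'" using fs Cons1 by simp
    have sn': "snd (Fr r) = snd (Fr (e1' # r1'))" using sn Cons1 by simp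
    have "m = m' \<and> r = e1' # r1'" by (rule Cons.IH[OF vr v(2) fs' sn'])
    then show ?thesis using r' ee by simp
  qed
qed simp

abbreviation "hG \<equiv> indh relG relC (lett phi0)"

lemma part1: "\<exists>h \<in> hom grpG grpC.
            h (word_class relG [(Gx, False)]) = word_class relC [(Ca, False), (Cb, True), (Cb, True), (Cb, True)]
          \<and> h (word_class relG [(Gy, False)]) = word_class relC [(Cb, False), (Cb, False)]
          \<and> inj_on h (carrier grpG)"
proof (rule bexI[of _ hG])
  show "hG \<in> hom grpG grpC" by (rule indh_hom[OF relG_phi])
  have inj: "inj_on hG (carrier grpG)"
  proof (rule inj_onI)
    fix P Q assume P: "P \<in> carrier grpG" and Q: "Q \<in> carrier grpG" and eq: "hG P = hG Q"
    obtain u where u: "P = word_class relG u" using P carrier_wc by blast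
    obtain v where v: "Q = word_class relG v" using Q carrier_wc by blast
    have "pres_eq relC (wmap (lett phi0) u) (wmap (lett phi0) v)"
      using eq u v by (simp add: indh_wc[OF relG_phi] wc_eq)
    then have "foldl stC (0, []) (wmap (lett phi0) u) = foldl stC (0, []) (wmap (lett phi0) v)"
      by (rule inv_C) (simp add: rd_def)
    then have ie: "iota (stateG u) = iota (stateG v)" by (simp add: state_iota)
    obtain m r where su: "stateG u = (m, r)" by (cases "stateG u")
    obtain m' r' where sv: "stateG v = (m', r')" by (cases "stateG v")
    have "vG r" "vG r'" using exist_G[of u] exist_G[of v] su sv by auto
    moreover have "fst (Fr r) - 6 * m = fst (Fr r') - 6 * m'" "snd (Fr r) = snd (Fr r')"
      using ie su sv by (simp_all add: iota_F)
    ultimately have "m = m' \<and> r = r'" by (rule iota_inj)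
    then have "stateG u = stateG v" using su sv by simp
    then have "pres_eq relG u v" using exist_G[of u] exist_G[of v] by (metis pe_sym pe_trans)
    then show "P = Q" using u v by (simp add: wc_eq)
  qed
  then show "hG (word_class relG [(Gx, False)]) = word_class relC [(Ca, False), (Cb, True), (Cb, True), (Cb, True)]
          \<and> hG (word_class relG [(Gy, False)]) = word_class relC [(Cb, False), (Cb, False)]
          \<and> inj_on hG (carrier grpG)"
    by (simp add: indh_wc[OF relG_phi] lett_def)
qed


theorem mainTheorem4:
  shows "(\<exists>h \<in> hom grpG grpC.
            h (word_class relG [(Gx, False)]) = word_class relC [(Ca, False), (Cb, True), (Cb, True), (Cb, True)]
          \<and> h (word_class relG [(Gy, False)]) = word_class relC [(Cb, False), (Cb, False)]
          \<and> inj_on h (carrier grpG))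
       \<and> (\<exists>h \<in> iso grpC grpG1.
            h (word_class relC [(Ca, False)]) = word_class relG1 [(A0, False)]
          \<and> h (word_class relC [(Cb, False)]) = word_class relG1 [(Bg, False)])
       \<and> (\<forall>g \<in> carrier grpG1. \<exists>!(n, as). normal_letters as \<and>
            g = (word_class relG1 [(Bg, False)]) [^]\<^bsub>grpG1\<^esub> (n::int) \<otimes>\<^bsub>grpG1\<^esub> letters_prod as)"
  using part1 part2 part3 by blast

end
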